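(* Let $R_0^*\in SO(3)$ and $x_1,\dots,x_\ell\in\mathbb{R}^3$. Then $$\lambda_{\min2}\Big(\sum_{i=1}^\ell P_i\Big)=\sum_{i=1}^\ell4\|x_i\|_2^2-\lambda_{\max}\Big(\sum_{i=1}^\ell4x_ix_i^\top\Big).$$
   Context: For $w=[w_1;w_2;w_3;w_4]\in\mathbb{S}^3$, $R(w)=\begin{bmatrix} w_1^2+w_2^2-w_3^2-w_4^2 & 2(w_2w_3-w_1w_4) & 2(w_2w_4+w_1w_3)\\ 2(w_2w_3+w_1w_4) & w_1^2+w_3^2-w_2^2-w_4^2 & 2(w_3w_4-w_1w_2)\\ 2(w_2w_4-w_1w_3) & 2(w_3w_4+w_1w_2) & w_1^2+w_4^2-w_2^2-w_3^2\end{bmatrix}\in SO(3)$. $P_i$ is the unique symmetric $4\times4$ matrix with $w^\top P_iw=\|R_0^*x_i-R(w)x_i\|_2^2$ for all $w\in\mathbb{S}^3$. $\lambda_{\min2}$ is the second smallest eigenvalue (counting multiplicity), $\lambda_{\max}$ the largest. *)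

theory Defs
  imports "HOL-Analysis.Analysis" "HOL-Computational_Algebra.Polynomial" "HOL-Library.Multiset"
begin

text \<open>Quaternion-to-rotation map R(w), components w_1..w_4 are w$1..w$4.\<close>
definition Rq :: "real^4 \<Rightarrow> real^3^3" where
  "Rq w = (let w1 = w$1; w2 = w$2; w3 = w$3; w4 = w$4 in
     vector [
       vector [w1^2+w2^2-w3^2-w4^2, 2*(w2*w3-w1*w4), 2*(w2*w4+w1*w3)],
       vector [2*(w2*w3+w1*w4), w1^2+w3^2-w2^2-w4^2, 2*(w3*w4-w1*w2)],
       vector [2*(w2*w4-w1*w3), 2*(w3*w4+w1*w2), w1^2+w4^2-w2^2-w3^2]])"

definition Pmat :: "real^3^3 \<Rightarrow> real^3 \<Rightarrow> real^4^4" where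
  "Pmat R0 x = (THE P. transpose P = P \<and>
      (\<forall>w::real^4. norm w = 1 \<longrightarrow> w \<bullet> (P *v w) = (norm (R0 *v x - Rq w *v x))^2))"

definition charpoly :: "real^'n^'n \<Rightarrow> real poly" where
  "charpoly A = det (\<chi> i j. (if i = j then [:0, 1:] else 0) - [:A$i$j:])"

definition eigs_sorted :: "real^'n^'n \<Rightarrow> real list" where
  "eigs_sorted A = sorted_list_of_multiset (proots (charpoly A))"

definition lambda_min2 :: "real^'n^'n \<Rightarrow> real" where
  "lambda_min2 A = eigs_sorted A ! 1"

definition lambda_max :: "real^'n^'n \<Rightarrow> real" where
  "lambda_max A = last (eigs_sorted A)"

definition outer :: "real^'n \<Rightarrow> real^'n^'n" where
  "outer x = (\<chi> i j. x$i * x$j)"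

end

theory Submission
  imports Defs
begin


lemma det_4:
  "det (A::'a::comm_ring_1^4^4) = A$1$1 * A$2$2 * A$3$3 * A$4$4 - A$1$1 * A$2$2 * A$3$4 * A$4$3 - A$1$1 * A$2$3 * A$3$2 * A$4$4 + A$1$1 * A$2$3 * A$3$4 * A$4$2 + A$1$1 * A$2$4 * A$3$2 * A$4$3 - A$1$1 * A$2$4 * A$3$3 * A$4$2 - A$1$2 * A$2$1 * A$3$3 * A$4$4 + A$1$2 * A$2$1 * A$3$4 * A$4$3 + A$1$2 * A$2$3 * A$3$1 * A$4$4 - A$1$2 * A$2$3 * A$3$4 * A$4$1 - A$1$2 * A$2$4 * A$3$1 * A$4$3 + A$1$2 * A$2$4 * A$3$3 * A$4$1 + A$1$3 * A$2$1 * A$3$2 * A$4$4 - A$1$3 * A$2$1 * A$3$4 * A$4$2 - A$1$3 * A$2$2 * A$3$1 * A$4$4 + A$1$3 * A$2$2 * A$3$4 * A$4$1 + A$1$3 * A$2$4 * A$3$1 * A$4$2 - A$1$3 * A$2$4 * A$3$2 * A$4$1 - A$1$4 * A$2$1 * A$3$2 * A$4$3 + A$1$4 * A$2$1 * A$3$3 * A$4$2 + A$1$4 * A$2$2 * A$3$1 * A$4$3 - A$1$4 * A$2$2 * A$3$3 * A$4$1 - A$1$4 * A$2$3 * A$3$1 * A$4$2 + A$1$4 * A$2$3 * A$3$2 * A$4$1"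
proof -
  have f1: "finite {2::4, 3, 4}" "1 \<notin> {2::4, 3, 4}" by auto
  have f2: "finite {3::4, 4}" "2 \<notin> {3::4, 4}" by auto
  have f3: "finite {4::4}" "3 \<notin> {4::4}" by auto
  show ?thesis
    unfolding det_def UNIV_4
    unfolding sum_over_permutations_insert[OF f1]
    unfolding sum_over_permutations_insert[OF f2]
    unfolding sum_over_permutations_insert[OF f3]
    unfolding permutes_sing
    by (simp add: sign_swap_id permutation_swap_id permutation_compose sign_compose sign_id swap_id_eq algebra_simps)
qed

lemma vector_4 [simp]:
 "(vector [a,b,c,d] ::('a::zero)^4)$1 = a"
 "(vector [a,b,c,d] ::('a::zero)^4)$2 = b"
 "(vector [a,b,c,d] ::('a::zero)^4)$3 = c"
 "(vector [a,b,c,d] ::('a::zero)^4)$4 = d"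
  unfolding vector_def by auto

definition Kmat :: "real^3^3 \<Rightarrow> real^4^4" where
 "Kmat B = vector [
   vector [B$1$1+B$2$2+B$3$3, B$3$2-B$2$3, B$1$3-B$3$1, B$2$1-B$1$2],
   vector [B$3$2-B$2$3, B$1$1-B$2$2-B$3$3, B$1$2+B$2$1, B$1$3+B$3$1],
   vector [B$1$3-B$3$1, B$1$2+B$2$1, -B$1$1+B$2$2-B$3$3, B$2$3+B$3$2],
   vector [B$2$1-B$1$2, B$1$3+B$3$1, B$2$3+B$3$2, -B$1$1-B$2$2+B$3$3]]"

lemma Kdet:
  fixes B :: "real^3^3"
  defines "G \<equiv> transpose B ** B"
  shows "det (\<chi> i j. (if i = j then u else 0) - Kmat B $i$j) =
     u^4 - 2*trace G*u^2 - 8*det B*u + 2*trace (G ** G) - (trace G)^2"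
  unfolding G_def
  apply (simp add: det_4 det_3 Kmat_def trace_def matrix_matrix_mult_def sum_3 transpose_def)
  apply algebra
  done

lemma Kdet2:
  fixes B :: "real^3^3"
  defines "G \<equiv> transpose B ** B"
  shows "det (\<chi> i j. (if i = j then -2*u else 0) + 2*Kmat B $i$j) =
     16*(u^4 - 2*trace G*u^2 - 8*det B*u + 2*trace (G ** G) - (trace G)^2)"
  unfolding G_def
  apply (simp add: det_4 det_3 Kmat_def trace_def matrix_matrix_mult_def sum_3 transpose_def)
  apply algebra
  done

lemma FinId:
  fixes M :: "real^3^3"
  assumes "transpose M = M"
  shows "16*(u^4 - 2*trace(M**M)*u^2 - 8*det M*u + 2*trace((M**M)**(M**M)) - (trace (M**M))^2)
    = -(2*trace M - 2*u) * det(\<chi> a b. (if a=b then 2*trace M + 2*u else 0) - 4*M$a$b)"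
proof -
  have s: "M$j$i = M$i$j" for i j using arg_cong[OF assms, of "\<lambda>A. A$i$j"] by (simp add: transpose_def)
  show ?thesis
  apply (simp add: det_3 trace_def matrix_matrix_mult_def sum_3)
  apply (simp add: s[of 1 2] s[of 1 3] s[of 2 3])
  apply algebra
  done
qed



lemma poly_charpoly: "poly (charpoly A) t = det (\<chi> i j. (if i = j then t else 0) - A$i$j)"
proof -
  have aux: "poly (if b then [:0,1:] else 0) t = (if b then t else 0)" for b by simp
  show ?thesis by (simp add: charpoly_def det_def poly_sum poly_prod aux)
qed

lemma transpose_diff: "transpose (A - B) = transpose A - transpose (B::'a::ab_group_add^'n^'m)"
  by (simp add: transpose_def vec_eq_iff)

definition Bm :: "real^3 \<Rightarrow> real^3 \<Rightarrow> real^3^3" where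
  "Bm y x = (\<chi> j k. y$j * x$k)"

lemma qK: "w \<bullet> (Kmat B *v w) = (\<Sum>j\<in>UNIV. \<Sum>k\<in>UNIV. B$j$k * Rq w $j$k)"
  apply (simp add: inner_vec_def sum_4 sum_3 matrix_vector_mult_def Kmat_def Rq_def Let_def)
  apply algebra
  done

lemma yRx: "y \<bullet> (Rq w *v x) = (\<Sum>j\<in>UNIV. \<Sum>k\<in>UNIV. Bm y x $j$k * Rq w $j$k)"
  apply (simp add: inner_vec_def sum_3 matrix_vector_mult_def Bm_def)
  apply algebra
  done

lemma normR: "(Rq w *v x) \<bullet> (Rq w *v x) = (w \<bullet> w)^2 * (x \<bullet> x)"
  apply (simp add: inner_vec_def sum_4 sum_3 matrix_vector_mult_def Rq_def Let_def)
  apply algebra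
  done

lemma Kmat_sym: "transpose (Kmat B) = Kmat B"
  by (simp add: vec_eq_iff forall_4 transpose_def Kmat_def)

lemma qf_zero:
  fixes D :: "real^'n^'n"
  assumes sym: "transpose D = D" and q: "\<And>w. norm w = 1 \<Longrightarrow> w \<bullet> (D *v w) = 0"
  shows "D = 0"
proof -
  have q2: "w \<bullet> (D *v w) = 0" for w
  proof (cases "w = 0")
    case True then show ?thesis by simp
  next
    case False
    define v where "v = (1 / norm w) *\<^sub>R w"
    have nv: "norm v = 1" using False by (simp add: v_def)
    have w: "w = norm w *\<^sub>R v" using False by (simp add: v_def)
    have "w \<bullet> (D *v w) = (norm w)^2 * (v \<bullet> (D *v v))"
      by (subst w, subst w) (simp add: matrix_vector_mult_scaleR power2_eq_square)
    then show ?thesis using q[OF nv] by simp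
  qed
  have symf: "u \<bullet> (D *v v) = v \<bullet> (D *v u)" for u v
  proof -
    have "u \<bullet> (D *v v) = (u v* D) \<bullet> v" by (simp add: dot_lmul_matrix)
    also have "u v* D = transpose D *v u" by simp
    also have "\<dots> = D *v u" using sym by simp
    finally show ?thesis by (simp add: inner_commute)
  qed
  have bil: "u \<bullet> (D *v v) = 0" for u v
  proof -
    have "(u + v) \<bullet> (D *v (u + v)) = u \<bullet> (D *v u) + v \<bullet> (D *v v) + u \<bullet> (D *v v) + v \<bullet> (D *v u)"
      by (simp add: matrix_vector_right_distrib inner_add_left inner_add_right)
    then show ?thesis using q2[of "u+v"] q2[of u] q2[of v] symf[of u v] by simp
  qed
  have "D *v v = 0" for v using bil[of "D *v v" v] by simp
  then show ?thesis by (simp add: matrix_eq)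
qed

lemma qf_unique:
  fixes P Q :: "real^'n^'n"
  assumes "transpose P = P" "transpose Q = Q" "\<And>w. norm w = 1 \<Longrightarrow> w \<bullet> (P *v w) = w \<bullet> (Q *v w)"
  shows "P = Q"
proof -
  have "P - Q = 0"
    apply (rule qf_zero)
    using assms by (simp_all add: transpose_diff matrix_vector_mult_diff_rdistrib inner_diff_right)
  then show ?thesis by simp
qed

definition P0 :: "real^3^3 \<Rightarrow> real^3 \<Rightarrow> real^4^4" where
  "P0 R0 x = (2 * (x \<bullet> x)) *\<^sub>R mat 1 - 2 *\<^sub>R Kmat (Bm (R0 *v x) x)"

lemma scaleR_mv: "(c *\<^sub>R A) *v w = c *\<^sub>R (A *v (w::real^'n))"
  by (simp add: vec_eq_iff matrix_vector_mult_def sum_distrib_left mult.assoc)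

lemma orth_inner:
  fixes R0 :: "real^'n^'n"
  assumes "orthogonal_matrix R0"
  shows "(R0 *v x) \<bullet> (R0 *v x) = x \<bullet> x"
proof -
  have "(R0 *v x) \<bullet> (R0 *v x) = ((R0 *v x) v* R0) \<bullet> x" using dot_lmul_matrix[of "R0 *v x" R0 x] by simp
  also have "(R0 *v x) v* R0 = (transpose R0 ** R0) *v x"
    by (metis matrix_vector_mul_assoc transpose_matrix_vector)
  also have "\<dots> = x" using assms by (simp add: orthogonal_matrix_def)
  finally show ?thesis .
qed

lemma Pmat_eq:
  assumes "orthogonal_matrix R0"
  shows "Pmat R0 x = P0 R0 x"
proof -
  have symP0: "transpose (P0 R0 x) = P0 R0 x"
    by (simp add: P0_def transpose_diff Kmat_sym transpose_scalar)
  have qP0: "w \<bullet> (P0 R0 x *v w) = (norm (R0 *v x - Rq w *v x))^2" if "norm w = 1" for w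
  proof -
    have ww: "w \<bullet> w = 1" using that by (simp add: norm_eq_1)
    have "(norm (R0 *v x - Rq w *v x))^2 = (R0 *v x - Rq w *v x) \<bullet> (R0 *v x - Rq w *v x)"
      by (simp add: power2_norm_eq_inner)
    also have "\<dots> = (R0 *v x) \<bullet> (R0 *v x) - 2 * ((R0 *v x) \<bullet> (Rq w *v x)) + (Rq w *v x) \<bullet> (Rq w *v x)"
      by (simp add: inner_diff_left inner_diff_right inner_commute)
    also have "\<dots> = 2 * (x \<bullet> x) - 2 * ((R0 *v x) \<bullet> (Rq w *v x))"
      using orth_inner[OF assms] normR[of w x] ww by simp
    finally have 1: "(norm (R0 *v x - Rq w *v x))^2 = 2 * (x \<bullet> x) - 2 * ((R0 *v x) \<bullet> (Rq w *v x))" .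
    have "w \<bullet> (P0 R0 x *v w) = 2 * (x \<bullet> x) * (w \<bullet> w) - 2 * (w \<bullet> (Kmat (Bm (R0 *v x) x) *v w))"
      by (simp add: P0_def matrix_vector_mult_diff_rdistrib inner_diff_right scaleR_mv)
    also have "\<dots> = 2 * (x \<bullet> x) - 2 * ((R0 *v x) \<bullet> (Rq w *v x))"
      by (simp add: ww qK yRx)
    finally show ?thesis using 1 by simp
  qed
  show ?thesis
    unfolding Pmat_def
  proof (rule the_equality)
    show "transpose (P0 R0 x) = P0 R0 x \<and> (\<forall>w. norm w = 1 \<longrightarrow> w \<bullet> (P0 R0 x *v w) = (norm (R0 *v x - Rq w *v x))\<^sup>2)"
      using symP0 qP0 by blast
  next
    fix P assume P: "transpose P = P \<and> (\<forall>w::real^4. norm w = 1 \<longrightarrow> w \<bullet> (P *v w) = (norm (R0 *v x - Rq w *v x))\<^sup>2)"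
    show "P = P0 R0 x"
      apply (rule qf_unique)
      using P symP0 qP0 by auto
  qed
qed



lemma Kmat_add: "Kmat (A + B) = Kmat A + Kmat B"
  by (simp add: Kmat_def vec_eq_iff forall_4 algebra_simps)

lemma Kmat_zero: "Kmat 0 = 0"
  by (simp add: Kmat_def vec_eq_iff forall_4)

lemma Kmat_sum: "finite I \<Longrightarrow> Kmat (\<Sum>i\<in>I. f i) = (\<Sum>i\<in>I. Kmat (f i))"
  by (induct rule: finite_induct) (simp_all add: Kmat_zero Kmat_add)

lemma mmul_sum: "finite I \<Longrightarrow> (R::real^'n^'m) ** (\<Sum>i\<in>I. f i) = (\<Sum>i\<in>I. R ** f i)"
proof (induct rule: finite_induct)
  case empty then show ?case by (simp add: matrix_matrix_mult_def vec_eq_iff)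
next
  case (insert a F) then show ?case by (simp add: matrix_add_ldistrib)
qed

lemma mv_sum: "finite I \<Longrightarrow> (\<Sum>i\<in>I. f i) *v (v::real^'n) = (\<Sum>i\<in>I. f i *v v)"
  by (induct rule: finite_induct) (simp_all add: matrix_vector_mult_add_rdistrib)

lemma Bm_eq: "Bm (R0 *v x) x = R0 ** outer x"
  by (simp add: vec_eq_iff Bm_def outer_def matrix_matrix_mult_def matrix_vector_mult_def sum_distrib_right mult.assoc)

lemma outer_mv: "outer x *v v = (x \<bullet> v) *\<^sub>R x"
  by (simp add: vec_eq_iff outer_def matrix_vector_mult_def inner_vec_def sum_distrib_left mult_ac)

lemma diag_mv: "(\<chi> i j. (if i = j then c else 0) - A$i$j) *v v = c *\<^sub>R v - A *v (v::real^'n)"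
proof -
  have aux: "(if i = j then c else 0) * y = (if i = j then c*y else 0)" for i j :: 'n and y :: real by simp
  show ?thesis by (simp add: vec_eq_iff matrix_vector_mult_def sum_subtractf left_diff_distrib aux)
qed

lemma det0_eig:
  fixes N :: "real^'n^'n"
  assumes "det N = 0"
  shows "\<exists>v. v \<noteq> 0 \<and> N *v v = 0"
proof -
  have "\<not> invertible N" using assms invertible_det_nz by blast
  then have "\<not> (\<exists>B. B ** N = mat 1)" using invertible_left_inverse by blast
  then show ?thesis using matrix_left_invertible_ker by blast
qed

lemma cubic_pos:
  fixes a b c :: real
  defines "T \<equiv> 1 + \<bar>a\<bar> + \<bar>b\<bar> + \<bar>c\<bar>"
  shows "T^3 + a*T^2 + b*T + c > 0"
proof -
  have T1: "T \<ge> 1" unfolding T_def by simp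
  have T2: "T \<le> T^2" using T1 by (simp add: power2_eq_square)
  have T21: "1 \<le> T^2" using T1 T2 by linarith
  have h1: "-\<bar>a\<bar>*T^2 \<le> a*T^2" by (rule mult_right_mono) simp_all
  have "-\<bar>b\<bar>*T^2 \<le> -\<bar>b\<bar>*T" using T2 by (simp add: mult_left_mono)
  moreover have "-\<bar>b\<bar>*T \<le> b*T" using T1 by (intro mult_right_mono) simp_all
  ultimately have h2: "-\<bar>b\<bar>*T^2 \<le> b*T" by linarith
  have "-\<bar>c\<bar>*T^2 \<le> -\<bar>c\<bar>" using mult_left_mono[OF T21, of "\<bar>c\<bar>"] by simp
  then have h3: "-\<bar>c\<bar>*T^2 \<le> c" by linarith
  have e: "T^3 = (1 + \<bar>a\<bar> + \<bar>b\<bar> + \<bar>c\<bar>) * T^2" unfolding T_def by (simp add: power3_eq_cube power2_eq_square)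
  have "T^3 + a*T^2 + b*T + c \<ge> T^2"
    using h1 h2 h3 e by (simp add: algebra_simps)
  then show ?thesis using T21 by linarith
qed

lemma cubic_root_ex:
  fixes p :: "real poly"
  assumes "\<And>t. poly p t = t^3 + a*t^2 + b*t + c"
  shows "p \<noteq> 0 \<and> (\<exists>r. poly p r = 0)"
proof -
  define T where "T = 1 + \<bar>a\<bar> + \<bar>b\<bar> + \<bar>c\<bar>"
  have pos: "poly p T > 0" using cubic_pos[of a b c] assms unfolding T_def by simp
  have "T^3 + (-a)*T^2 + b*T + (-c) > 0" using cubic_pos[of "-a" b "-c"] unfolding T_def by simp
  then have neg: "poly p (-T) < 0" using assms by (simp add: power3_eq_cube power2_eq_square algebra_simps)
  have "-T < T" unfolding T_def by simp
  then obtain r where "poly p r = 0" using poly_IVT_pos[OF _ neg pos] by blast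
  moreover have "p \<noteq> 0" using pos by auto
  ultimately show ?thesis by blast
qed

lemma charpoly3:
  fixes A :: "real^3^3"
  shows "poly (charpoly A) t = t^3 + (-(A$1$1 + A$2$2 + A$3$3))*t^2
     + (A$1$1*A$2$2 + A$1$1*A$3$3 + A$2$2*A$3$3 - A$1$2*A$2$1 - A$1$3*A$3$1 - A$2$3*A$3$2)*t
     + (- det A)"
  unfolding poly_charpoly by (simp add: det_3) algebra

lemma sorted_last_Max: "sorted L \<Longrightarrow> L \<noteq> [] \<Longrightarrow> last L = Max (set L)"
proof (induct L)
  case Nil then show ?case by simp
next
  case (Cons a L)
  show ?case
  proof (cases "L = []")
    case True then show ?thesis by simp
  next
    case False
    then have "last L = Max (set L)" using Cons by simp
    moreover have "a \<le> Max (set L)" using Cons.prems False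
      by (metis Max_ge List.finite_set dual_order.trans last_in_set calculation sorted_simps(2))
    ultimately show ?thesis using False by (simp add: max_def)
  qed
qed

lemma sorted_hd_Min: "sorted L \<Longrightarrow> L \<noteq> [] \<Longrightarrow> L ! 0 = Min (set L)"
  by (cases L) (auto intro!: Min_eqI[symmetric])

lemma Min_neg_image:
  fixes X :: "real set"
  assumes "finite X" "X \<noteq> {}"
  shows "Min ((\<lambda>v. c - v) ` X) = c - Max X"
proof (rule Min_eqI)
  show "finite ((\<lambda>v. c - v) ` X)" using assms by simp
  show "c - Max X \<in> (\<lambda>v. c - v) ` X" using assms Max_in by blast
  fix y assume "y \<in> (\<lambda>v. c - v) ` X"
  then obtain v where "v \<in> X" "y = c - v" by blast
  then show "c - Max X \<le> y" using assms Max_ge by fastforce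
qed



theorem lemma4p5:
  fixes R0 :: "real^3^3" and x :: "nat \<Rightarrow> real^3" and l :: nat
  assumes "rotation_matrix R0"
  shows "lambda_min2 (\<Sum>i=1..l. Pmat R0 (x i))
         = (\<Sum>i=1..l. 4 * (norm (x i))^2) - lambda_max (\<Sum>i=1..l. 4 *\<^sub>R outer (x i))"
proof -
  have fI: "finite {1..l}" by simp
  have orth: "orthogonal_matrix R0" and detR: "det R0 = 1"
    using assms by (auto simp: rotation_matrix_def)
  define M where "M = (\<Sum>i=1..l. outer (x i))"
  define ssq where "ssq = (\<Sum>i=1..l. x i \<bullet> x i)"
  define S4 where "S4 = (\<Sum>i=1..l. 4 * (norm (x i))^2)"
  define A where "A = (\<Sum>i=1..l. 4 *\<^sub>R outer (x i))"
  define Pt where "Pt = (\<Sum>i=1..l. Pmat R0 (x i))"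
  define B where "B = R0 ** M"
  have S4s: "S4 = 4 * ssq" by (simp add: S4_def ssq_def power2_norm_eq_inner sum_distrib_left)
  have AM: "A = 4 *\<^sub>R M" by (simp add: A_def M_def scaleR_sum_right)
  have Msym: "transpose M = M"
    by (simp add: M_def vec_eq_iff transpose_def outer_def mult.commute)
  have trM: "trace M = ssq"
    unfolding M_def ssq_def trace_def outer_def inner_vec_def
    by (simp add: sum.swap[of _ UNIV])
  have Pt_eq: "Pt = (2 * ssq) *\<^sub>R mat 1 - 2 *\<^sub>R Kmat B"
  proof -
    have "Pt = (\<Sum>i=1..l. (2 * (x i \<bullet> x i)) *\<^sub>R mat 1 - 2 *\<^sub>R Kmat (R0 ** outer (x i)))"
      unfolding Pt_def using Pmat_eq[OF orth] by (simp add: P0_def Bm_eq)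
    also have "\<dots> = (\<Sum>i=1..l. (2 * (x i \<bullet> x i))) *\<^sub>R mat 1 - 2 *\<^sub>R Kmat (R0 ** M)"
      by (simp add: sum_subtractf scaleR_sum_left scaleR_sum_right Kmat_sum mmul_sum M_def)
    finally show ?thesis by (simp add: B_def ssq_def sum_distrib_left)
  qed
  have G: "transpose B ** B = M ** M"
  proof -
    have "transpose B ** B = transpose M ** (transpose R0 ** R0) ** M"
      by (simp add: B_def matrix_transpose_mul matrix_mul_assoc)
    also have "\<dots> = M ** M" using orth Msym by (simp add: orthogonal_matrix_def)
    finally show ?thesis .
  qed
  have dB: "det B = det M" by (simp add: B_def det_mul detR)
  have cP: "poly (charpoly Pt) t = - t * poly (charpoly A) (S4 - t)" for t
  proof -
    define u where "u = (2 * ssq - t)/2"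
    have u1: "-2*u = t - 2 * ssq" and u2: "2 * ssq - 2*u = t" and u3: "2 * ssq + 2*u = 4 * ssq - t"
      by (simp_all add: u_def field_simps)
    have "poly (charpoly Pt) t = det (\<chi> i j. (if i = j then -2*u else 0) + 2*Kmat B$i$j)"
      unfolding poly_charpoly Pt_eq u1
      by (intro arg_cong[where f=det]) (simp add: vec_eq_iff mat_def)
    also have "\<dots> = 16*(u^4 - 2*trace(M**M)*u^2 - 8*det M*u + 2*trace((M**M)**(M**M)) - (trace(M**M))^2)"
      using Kdet2[of u B] G dB by simp
    also have "\<dots> = -(2*trace M - 2*u) * det(\<chi> a b. (if a=b then 2*trace M + 2*u else 0) - 4*M$a$b)"
      by (rule FinId[OF Msym])
    also have "\<dots> = - t * poly (charpoly A) (S4 - t)"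
      unfolding poly_charpoly trM u2 u3 AM S4s by simp
    finally show ?thesis .
  qed
  define cA where "cA = charpoly A"
  define Q where "Q = pcompose cA [:S4, -1:]"
  have polyQ: "poly Q y = poly cA (S4 - y)" for y by (simp add: Q_def poly_pcompose)
  obtain r where cA0: "cA \<noteq> 0" and r: "poly cA r = 0"
    using cubic_root_ex[OF charpoly3[of A]] unfolding cA_def by blast
  have Q0: "Q \<noteq> 0"
  proof
    assume "Q = 0"
    then have "poly cA y = 0" for y using polyQ[of "S4 - y"] by simp
    then show False using cA0 poly_all_0_iff_0 by blast
  qed
  have "poly (charpoly Pt) = poly (- ([:0,1:] * Q))"
    by (rule ext) (simp add: cP polyQ cA_def)
  then have cPeq: "charpoly Pt = - ([:0,1:] * Q)" using poly_eq_poly_eq_iff by blast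
  have prP: "proots (charpoly Pt) = add_mset 0 (proots Q)"
  proof -
    have "proots ([:0,1:] * Q) = proots [:0,1:] + proots Q"
      by (rule proots_mult) (simp_all add: Q0)
    moreover have "proots [:0::real,1:] = {#0#}" using proots_linear_factor[of "0::real"] by simp
    ultimately show ?thesis unfolding cPeq proots_uminus by simp
  qed
  have bnd: "0 \<le> \<nu> \<and> \<nu> \<le> S4" if nu: "poly cA \<nu> = 0" for \<nu>
  proof -
    have "det (\<chi> i j. (if i = j then \<nu> else 0) - A$i$j) = 0"
      using nu unfolding cA_def poly_charpoly .
    then obtain v where v0: "v \<noteq> 0" and "(\<chi> i j. (if i = j then \<nu> else 0) - A$i$j) *v v = 0"
      using det0_eig by blast
    then have Av: "A *v v = \<nu> *\<^sub>R v" by (simp add: diag_mv)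
    have "A *v v = 4 *\<^sub>R (\<Sum>i=1..l. (x i \<bullet> v) *\<^sub>R x i)"
      by (simp add: AM scaleR_mv M_def mv_sum outer_mv)
    then have "v \<bullet> (A *v v) = 4 * (\<Sum>i=1..l. (x i \<bullet> v)^2)"
      by (simp add: inner_sum_right power2_eq_square inner_commute)
    then have key: "\<nu> * (v \<bullet> v) = 4 * (\<Sum>i=1..l. (x i \<bullet> v)^2)" using Av by simp
    have vv: "v \<bullet> v > 0" using v0 by simp
    have "0 \<le> (\<Sum>i=1..l. (x i \<bullet> v)^2)" by (simp add: sum_nonneg)
    then have "0 \<le> \<nu> * (v \<bullet> v)" using key by simp
    then have g0: "0 \<le> \<nu>" using vv by (simp add: zero_le_mult_iff)
    have "(\<Sum>i=1..l. (x i \<bullet> v)^2) \<le> (\<Sum>i=1..l. (x i \<bullet> x i) * (v \<bullet> v))"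
      by (rule sum_mono) (rule Cauchy_Schwarz_ineq)
    also have "\<dots> = ssq * (v \<bullet> v)" by (simp add: ssq_def sum_distrib_right)
    finally have "\<nu> * (v \<bullet> v) \<le> S4 * (v \<bullet> v)" using key S4s by simp
    then have "\<nu> \<le> S4" using vv by simp
    with g0 show ?thesis by simp
  qed
  define N where "N = proots cA"
  define N' where "N' = proots Q"
  have setN: "set_mset N = {\<nu>. poly cA \<nu> = 0}" using cA0 by (simp add: N_def)
  have setN': "set_mset N' = (\<lambda>\<nu>. S4 - \<nu>) ` set_mset N"
  proof -
    have "set_mset N' = {y. poly cA (S4 - y) = 0}" using Q0 by (simp add: N'_def polyQ)
    also have "\<dots> = (\<lambda>\<nu>. S4 - \<nu>) ` {\<nu>. poly cA \<nu> = 0}"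
    proof (rule set_eqI, rule iffI)
      fix y assume "y \<in> {y. poly cA (S4 - y) = 0}"
      then have "S4 - y \<in> {\<nu>. poly cA \<nu> = 0}" "y = S4 - (S4 - y)" by simp_all
      then show "y \<in> (\<lambda>\<nu>. S4 - \<nu>) ` {\<nu>. poly cA \<nu> = 0}" by blast
    next
      fix y assume "y \<in> (\<lambda>\<nu>. S4 - \<nu>) ` {\<nu>. poly cA \<nu> = 0}"
      then show "y \<in> {y. poly cA (S4 - y) = 0}" by auto
    qed
    finally show ?thesis using setN by simp
  qed
  have Nne: "set_mset N \<noteq> {}" using r setN by auto
  have N'ne: "set_mset N' \<noteq> {}" using Nne setN' by auto
  have N'pos: "\<forall>y\<in>set (sorted_list_of_multiset N'). 0 \<le> y"
    using setN' setN bnd by auto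
  have L: "eigs_sorted Pt = 0 # sorted_list_of_multiset N'"
    unfolding eigs_sorted_def prP N'_def[symmetric] sorted_list_of_multiset_insert
    using insort_is_Cons[of "sorted_list_of_multiset N'" "\<lambda>x. x" 0] N'pos by simp
  have "lambda_min2 Pt = sorted_list_of_multiset N' ! 0"
    unfolding lambda_min2_def L by simp
  also have "\<dots> = Min (set_mset N')"
  proof -
    have "sorted_list_of_multiset N' \<noteq> []"
      by (metis N'ne empty_set set_sorted_list_of_multiset)
    then show ?thesis using sorted_hd_Min[of "sorted_list_of_multiset N'"] by simp
  qed
  also have "\<dots> = S4 - Max (set_mset N)"
    unfolding setN' by (rule Min_neg_image) (use Nne in auto)
  also have "Max (set_mset N) = lambda_max A"
  proof -
    have "sorted_list_of_multiset N \<noteq> []"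
      by (metis Nne empty_set set_sorted_list_of_multiset)
    then show ?thesis using sorted_last_Max[of "sorted_list_of_multiset N"]
      by (simp add: lambda_max_def eigs_sorted_def cA_def N_def)
  qed
  finally show ?thesis unfolding Pt_def S4_def A_def .
qed

end
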